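(* Let $\alpha,\beta,\gamma,x\in\mathbb{N}_0$ with $(\alpha,\beta,\gamma,x)\neq(0,0,0,0)$, let $\lambda$ be a nonnegative integer and $n$ a nonnegative integer. Then $$A^{\lambda,x}_n(\alpha,\beta,\gamma)=\sum_{k=0}^{n}\binom{k+\lambda-1}{k}\sum_{i=0}^{n}\binom{n}{i}x^k(-1)^{k+i}\beta^k k!\,S(i,k,\alpha,-\beta,0)\,(\gamma|-\alpha)_{n-i}.$$
   Context: For a number $t$ and $\alpha$, the generalised factorial is $(t|\alpha)_n=\prod_{j=0}^{n-1}(t-j\alpha)$ for $n\ge 1$ and $(t|\alpha)_0=1$. For parameters $\alpha,\beta,\gamma$, the generalised Stirling numbers $S(n,k,\alpha,\beta,\gamma)$ ($0\le k\le n$) are defined by the polynomial identity $(t|\alpha)_n=\sum_{k=0}^{n}S(n,k,\alpha,\beta,\gamma)\,(t-\gamma|\beta)_k$ in the variable $t$, and $S(i,k,\alpha,\beta,\gamma)=0$ for $k>i$. For a nonnegative integer $\lambda$ put $\binom{k+\lambda-1}{k}=\lambda(\lambda+1)\cdots(\lambda+k-1)/k!$ (equal to $1$ for $k=0$). Define $$A^{\lambda,x}_n(\alpha,\beta,\gamma)=\sum_{k=0}^{n}\binom{k+\lambda-1}{k}(-1)^{n+k}\beta^k k!\,S(n,k,\alpha,-\beta,-\gamma)\,x^k .$$ *)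

theory Defs
  imports Complex_Main
begin

definition gfact :: "real \<Rightarrow> real \<Rightarrow> nat \<Rightarrow> real" where
  "gfact t a n = (\<Prod>j<n. (t - of_nat j * a))"

definition gstirling :: "nat \<Rightarrow> nat \<Rightarrow> real \<Rightarrow> real \<Rightarrow> real \<Rightarrow> real" where
  "gstirling n k a b g =
     (THE c. (\<forall>t. gfact t a n = (\<Sum>j\<le>n. c j * gfact (t - g) b j)) \<and> (\<forall>j>n. c j = 0)) k"

text \<open>binom(k+lambda-1, k) = lambda(lambda+1)...(lambda+k-1)/k!.\<close>
definition binomL :: "nat \<Rightarrow> nat \<Rightarrow> real" where
  "binomL lam k = pochhammer (real lam) k / fact k"

definition Apoly :: "nat \<Rightarrow> real \<Rightarrow> nat \<Rightarrow> real \<Rightarrow> real \<Rightarrow> real \<Rightarrow> real" where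
  "Apoly lam x n a b g =
     (\<Sum>k\<le>n. binomL lam k * (-1) ^ (n + k) * b ^ k * fact k * gstirling n k a (-b) (-g) * x ^ k)"

end

theory Submission
  imports Defs "HOL-Computational_Algebra.Polynomial"
begin


definition bpoly :: "real \<Rightarrow> real \<Rightarrow> nat \<Rightarrow> real poly" where
  "bpoly g b j = (\<Prod>i<j. [:-(g + of_nat i * b), 1:])"

lemma poly_bpoly: "poly (bpoly g b j) t = gfact (t - g) b j"
  unfolding bpoly_def gfact_def by (simp add: poly_prod algebra_simps)

lemma degree_bpoly: "degree (bpoly g b j) = j"
  unfolding bpoly_def by (subst degree_prod_eq_sum_degree) auto

lemma lead_bpoly: "coeff (bpoly g b j) j = 1"
  using lead_coeff_prod[of "\<lambda>i. [:-(g + of_nat i * b), 1:]" "{..<j}"]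
  unfolding bpoly_def[symmetric] degree_bpoly by simp

lemma uniq0:
  assumes "\<forall>t. (\<Sum>j\<le>n. c j * gfact (t - g) b j) = 0"
  shows "\<forall>j\<le>n. c j = 0"
  using assms
proof (induction n)
  case 0
  then show ?case by (simp add: gfact_def)
next
  case (Suc n)
  define Q where "Q = (\<Sum>j\<le>Suc n. smult (c j) (bpoly g b j))"
  have "\<forall>t. poly Q t = 0" using Suc.prems by (simp add: Q_def poly_sum poly_bpoly)
  hence Q0: "Q = 0" using poly_all_0_iff_0 by blast
  have "coeff Q (Suc n) = (\<Sum>j\<le>Suc n. c j * coeff (bpoly g b j) (Suc n))"
    by (simp add: Q_def coeff_sum)
  also have "\<dots> = c (Suc n)"
  proof -
    have "\<forall>j\<le>n. coeff (bpoly g b j) (Suc n) = 0"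
      by (auto intro!: coeff_eq_0 simp: degree_bpoly)
    then show ?thesis by (simp add: lead_bpoly)
  qed
  finally have cS: "c (Suc n) = 0" using Q0 by simp
  have "\<forall>t. (\<Sum>j\<le>n. c j * gfact (t - g) b j) = 0" using Suc.prems cS by simp
  from Suc.IH[OF this] cS show ?case using le_Suc_eq by auto
qed

lemma uniq:
  assumes "\<forall>t. (\<Sum>j\<le>n. c j * gfact (t - g) b j) = (\<Sum>j\<le>n. d j * gfact (t - g) b j)"
  shows "\<forall>j\<le>n. c j = d j"
proof -
  have "\<forall>t. (\<Sum>j\<le>n. (c j - d j) * gfact (t - g) b j) = 0"
    using assms by (simp add: algebra_simps sum_subtractf)
  from uniq0[OF this] show ?thesis by simp
qed

lemma gfact_Suc: "gfact t a (Suc n) = gfact t a n * (t - of_nat n * a)"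
  by (simp add: gfact_def)

lemma exist: "\<exists>c. (\<forall>t. gfact t a n = (\<Sum>j\<le>n. c j * gfact (t - g) b j)) \<and> (\<forall>j>n. c j = 0)"
proof (induction n)
  case 0
  show ?case by (rule exI[of _ "\<lambda>j. if j = 0 then 1 else 0"]) (simp add: gfact_def)
next
  case (Suc n)
  then obtain c where c1: "\<forall>t. gfact t a n = (\<Sum>j\<le>n. c j * gfact (t - g) b j)"
    and c2: "\<forall>j>n. c j = 0" by blast
  define c' where "c' j = (if j = 0 then 0 else c (j - 1)) + (g + of_nat j * b - of_nat n * a) * c j" for j
  have "gfact t a (Suc n) = (\<Sum>j\<le>Suc n. c' j * gfact (t - g) b j)" for t
  proof -
    have "gfact t a (Suc n) = (\<Sum>j\<le>n. c j * gfact (t - g) b j * (t - of_nat n * a))"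
      by (simp add: gfact_Suc c1 sum_distrib_right)
    also have "\<dots> = (\<Sum>j\<le>n. c j * gfact (t - g) b (Suc j)) +
        (\<Sum>j\<le>n. (g + of_nat j * b - of_nat n * a) * c j * gfact (t - g) b j)"
      unfolding sum.distrib[symmetric]
      by (rule sum.cong) (simp_all add: gfact_Suc algebra_simps)
    also have "(\<Sum>j\<le>n. c j * gfact (t - g) b (Suc j)) =
        (\<Sum>j\<le>Suc n. (if j = 0 then 0 else c (j - 1)) * gfact (t - g) b j)"
      by (subst sum.atMost_Suc_shift) simp
    also have "(\<Sum>j\<le>n. (g + of_nat j * b - of_nat n * a) * c j * gfact (t - g) b j) =
        (\<Sum>j\<le>Suc n. (g + of_nat j * b - of_nat n * a) * c j * gfact (t - g) b j)"
      using c2 by simp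
    also have "(\<Sum>j\<le>Suc n. (if j = 0 then 0 else c (j - 1)) * gfact (t - g) b j) +
        (\<Sum>j\<le>Suc n. (g + of_nat j * b - of_nat n * a) * c j * gfact (t - g) b j)
       = (\<Sum>j\<le>Suc n. c' j * gfact (t - g) b j)"
      unfolding sum.distrib[symmetric] c'_def distrib_right by (rule sum.cong) simp_all
    finally show ?thesis .
  qed
  moreover have "\<forall>j>Suc n. c' j = 0" using c2 by (simp add: c'_def)
  ultimately show ?case by blast
qed

lemma spec: "(\<forall>t. gfact t a n = (\<Sum>j\<le>n. gstirling n j a b g * gfact (t - g) b j))
   \<and> (\<forall>j>n. gstirling n j a b g = 0)"
proof -
  let ?P = "\<lambda>c. (\<forall>t. gfact t a n = (\<Sum>j\<le>n. c j * gfact (t - g) b j)) \<and> (\<forall>j>n. c j = 0)"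
  have "\<exists>!c. ?P c"
  proof (rule ex_ex1I)
    show "\<exists>c. ?P c" by (rule exist)
  next
    fix c d assume Pc: "?P c" and Pd: "?P d"
    have "\<forall>t. (\<Sum>j\<le>n. c j * gfact (t - g) b j) = (\<Sum>j\<le>n. d j * gfact (t - g) b j)"
    proof
      fix t
      have "(\<Sum>j\<le>n. c j * gfact (t - g) b j) = gfact t a n" using Pc by metis
      also have "\<dots> = (\<Sum>j\<le>n. d j * gfact (t - g) b j)" using Pd by metis
      finally show "(\<Sum>j\<le>n. c j * gfact (t - g) b j) = (\<Sum>j\<le>n. d j * gfact (t - g) b j)" .
    qed
    then have cd: "\<forall>j\<le>n. c j = d j" by (rule uniq)
    show "c = d"
    proof (rule ext)
      fix j show "c j = d j"
      proof (cases "j \<le> n")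
        case True then show ?thesis using cd by blast
      next
        case False then show ?thesis using Pc Pd by (metis not_le)
      qed
    qed
  qed
  from theI'[OF this] have "?P (THE c. ?P c)" .
  then show ?thesis unfolding gstirling_def by blast
qed

lemma gst_eq:
  assumes "\<forall>t. gfact t a n = (\<Sum>j\<le>n. c j * gfact (t - g) b j)" "k \<le> n"
  shows "gstirling n k a b g = c k"
proof -
  have "\<forall>t. (\<Sum>j\<le>n. gstirling n j a b g * gfact (t - g) b j) = (\<Sum>j\<le>n. c j * gfact (t - g) b j)"
    using spec[of a n b g] assms(1) by metis
  then have "\<forall>j\<le>n. gstirling n j a b g = c j" by (rule uniq)
  with assms(2) show ?thesis by blast
qed

lemma gfact_vandermonde:
  "gfact (x + y) a n = (\<Sum>i\<le>n. of_nat (n choose i) * gfact x a i * gfact y a (n - i))"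
proof (cases "a = 0")
  case True
  then show ?thesis by (simp add: gfact_def binomial_ring mult_ac)
next
  case False
  have P: "gfact z a m = (-a) ^ m * pochhammer (-z/a) m" for z m
  proof -
    have "(-a) ^ m * pochhammer (-z/a) m = (\<Prod>j<m. -a) * (\<Prod>j<m. -z/a + of_nat j)"
      by (simp add: pochhammer_prod atLeast0LessThan)
    also have "\<dots> = gfact z a m" unfolding gfact_def prod.distrib[symmetric]
      using False by (intro prod.cong) (auto simp: field_simps)
    finally show ?thesis by simp
  qed
  have "gfact (x + y) a n = (-a)^n * pochhammer (-x/a + -y/a) n"
  proof -
    have "-(x+y)/a = -x/a + -y/a" using False by (simp add: field_simps)
    then show ?thesis by (simp only: P)
  qed
  also have "\<dots> = (\<Sum>i\<le>n. (-a)^n * (of_nat (n choose i) * pochhammer (-x/a) i * pochhammer (-y/a) (n - i)))"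
    by (simp only: pochhammer_binomial_sum sum_distrib_left)
  also have "\<dots> = (\<Sum>i\<le>n. of_nat (n choose i) * ((-a)^i * pochhammer (-x/a) i) * ((-a)^(n-i) * pochhammer (-y/a) (n - i)))"
  proof (rule sum.cong[OF refl])
    fix i assume "i \<in> {..n}"
    then have "(-a)^n = (-a)^i * (-a)^(n-i)" by (simp add: power_add[symmetric])
    then show "(-a)^n * (of_nat (n choose i) * pochhammer (-x/a) i * pochhammer (-y/a) (n - i)) =
      of_nat (n choose i) * ((-a)^i * pochhammer (-x/a) i) * ((-a)^(n-i) * pochhammer (-y/a) (n - i))"
      by (simp only: mult_ac)
  qed
  finally show ?thesis by (simp add: P)
qed



lemma gneg: "gfact (-g) a m = (-1)^m * gfact g (-a) m"
  by (induction m) (simp add: gfact_def, simp add: gfact_Suc algebra_simps)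

lemma sgn: "i \<le> n \<Longrightarrow> (-1::real)^(n+k) * (-1)^(n-i) = (-1)^(k+i)"
proof -
  assume "i \<le> n"
  then obtain d where d: "n = i + d" by (metis le_add_diff_inverse)
  have "(-1::real)^(n+k) * (-1)^(n-i) = (-1)^((k+i) + 2*d)"
  proof -
    have "(n+k) + (n-i) = (k+i) + 2*d" by (simp add: d)
    then show ?thesis by (simp only: power_add[symmetric])
  qed
  also have "\<dots> = (-1)^(k+i)" by (simp add: power_add power_mult)
  finally show ?thesis .
qed

lemma key:
  fixes a b g :: real
  assumes "k \<le> n"
  shows "gstirling n k a (-b) (-g) =
    (\<Sum>i\<le>n. of_nat (n choose i) * gstirling i k a (-b) 0 * gfact (-g) a (n-i))"
proof (rule gst_eq[OF _ assms])
  show "\<forall>t. gfact t a n = (\<Sum>j\<le>n. (\<Sum>i\<le>n. of_nat (n choose i) * gstirling i j a (-b) 0 * gfact (-g) a (n-i)) * gfact (t - -g) (-b) j)"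
  proof
    fix t
    have e: "gfact (t+g) a i = (\<Sum>j\<le>n. gstirling i j a (-b) 0 * gfact (t+g) (-b) j)" if "i \<le> n" for i
    proof -
      have "gfact (t+g) a i = (\<Sum>j\<le>i. gstirling i j a (-b) 0 * gfact (t+g) (-b) j)"
        using spec[of a i "-b" 0] by simp
      also have "\<dots> = (\<Sum>j\<le>n. gstirling i j a (-b) 0 * gfact (t+g) (-b) j)"
        using spec[of a i "-b" 0] that by (intro sum.mono_neutral_left) auto
      finally show ?thesis .
    qed
    have "gfact t a n = gfact ((t+g) + (-g)) a n" by simp
    also have "\<dots> = (\<Sum>i\<le>n. of_nat (n choose i) * gfact (t+g) a i * gfact (-g) a (n - i))"
      by (rule gfact_vandermonde)
    also have "\<dots> = (\<Sum>i\<le>n. \<Sum>j\<le>n. of_nat (n choose i) * gstirling i j a (-b) 0 * gfact (-g) a (n-i) * gfact (t+g) (-b) j)"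
      by (intro sum.cong refl) (simp add: e sum_distrib_left sum_distrib_right mult_ac)
    also have "\<dots> = (\<Sum>j\<le>n. (\<Sum>i\<le>n. of_nat (n choose i) * gstirling i j a (-b) 0 * gfact (-g) a (n-i)) * gfact (t - -g) (-b) j)"
      by (subst sum.swap) (simp add: sum_distrib_right)
    finally show "gfact t a n = (\<Sum>j\<le>n. (\<Sum>i\<le>n. of_nat (n choose i) * gstirling i j a (-b) 0 * gfact (-g) a (n-i)) * gfact (t - -g) (-b) j)" .
  qed
qed

theorem theorem7:
  fixes \<alpha> \<beta> \<gamma> x lam n :: nat
  assumes "(\<alpha>, \<beta>, \<gamma>, x) \<noteq> (0, 0, 0, 0)"
  shows "Apoly lam (real x) n (real \<alpha>) (real \<beta>) (real \<gamma>) =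
    (\<Sum>k\<le>n. binomL lam k *
       (\<Sum>i\<le>n. real (n choose i) * real x ^ k * (-1) ^ (k + i) * real \<beta> ^ k * fact k
          * gstirling i k (real \<alpha>) (- real \<beta>) 0 * gfact (real \<gamma>) (- real \<alpha>) (n - i)))"
  unfolding Apoly_def
proof (intro sum.cong refl)
  fix k assume k: "k \<in> {..n}"
  have "binomL lam k * (-1) ^ (n + k) * real \<beta> ^ k * fact k * gstirling n k (real \<alpha>) (- real \<beta>) (- real \<gamma>) * real x ^ k
    = binomL lam k * (\<Sum>i\<le>n. ((-1) ^ (n + k) * (-1)^(n-i)) * real \<beta> ^ k * fact k * real x ^ k * real (n choose i)
          * gstirling i k (real \<alpha>) (- real \<beta>) 0 * gfact (real \<gamma>) (- real \<alpha>) (n - i))"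
    using k by (simp add: key gneg sum_distrib_left mult_ac)
  also have "\<dots> = binomL lam k *
       (\<Sum>i\<le>n. real (n choose i) * real x ^ k * (-1) ^ (k + i) * real \<beta> ^ k * fact k
          * gstirling i k (real \<alpha>) (- real \<beta>) 0 * gfact (real \<gamma>) (- real \<alpha>) (n - i))"
  proof (intro arg_cong[where f="\<lambda>s. binomL lam k * s"] sum.cong refl)
    fix i assume "i \<in> {..n}"
    then have "(-1::real)^(n+k) * (-1)^(n-i) = (-1)^(k+i)" by (intro sgn) simp
    then show "((-1) ^ (n + k) * (-1)^(n-i)) * real \<beta> ^ k * fact k * real x ^ k * real (n choose i)
          * gstirling i k (real \<alpha>) (- real \<beta>) 0 * gfact (real \<gamma>) (- real \<alpha>) (n - i) =
      real (n choose i) * real x ^ k * (-1) ^ (k + i) * real \<beta> ^ k * fact k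
          * gstirling i k (real \<alpha>) (- real \<beta>) 0 * gfact (real \<gamma>) (- real \<alpha>) (n - i)"
      by (simp only: mult_ac)
  qed
  finally show "binomL lam k * (-1) ^ (n + k) * real \<beta> ^ k * fact k * gstirling n k (real \<alpha>) (- real \<beta>) (- real \<gamma>) * real x ^ k
    = binomL lam k *
       (\<Sum>i\<le>n. real (n choose i) * real x ^ k * (-1) ^ (k + i) * real \<beta> ^ k * fact k
          * gstirling i k (real \<alpha>) (- real \<beta>) 0 * gfact (real \<gamma>) (- real \<alpha>) (n - i))" .
qed

end
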